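(* Let $G=(V,E)$ be a finite block graph. If $G$ is identifiable (no distinct vertices $u,v$ with $N[u]=N[v]$), then $\gamma^{LD}(G)\leq n_Q(G)$; otherwise $\gamma^{LD}(G)\leq |V|-1$. Here $n_Q(G)$ is the number of maximal cliques of $G$.
   Context: A block graph is a graph in which every maximal 2-connected subgraph (block) is a clique. For a vertex $u$, $N(u)$ is its open neighborhood and $N[u]=N(u)\cup\{u\}$ its closed neighborhood. A set $C\subseteq V$ is a locating-dominating code (LD-code) if $N[u]\cap C\neq\emptyset$ for every vertex $u$ and $N(u)\cap C\neq N(v)\cap C$ for all distinct $u,v\in V\setminus C$. $\gamma^{LD}(G)$ is the minimum cardinality of an LD-code of $G$. *)

theory Defs
  imports Main
begin

definition simple_graph :: "'a set \<Rightarrow> ('a \<Rightarrow> 'a \<Rightarrow> bool) \<Rightarrow> bool" where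
  "simple_graph V adj \<longleftrightarrow> finite V \<and> (\<forall>x y. adj x y \<longrightarrow> x \<in> V \<and> y \<in> V)
     \<and> (\<forall>x y. adj x y \<longrightarrow> adj y x) \<and> (\<forall>x. \<not> adj x x)"

definition open_nbhd :: "'a set \<Rightarrow> ('a \<Rightarrow> 'a \<Rightarrow> bool) \<Rightarrow> 'a \<Rightarrow> 'a set" where
  "open_nbhd V adj u = {v \<in> V. adj u v}"

definition closed_nbhd :: "'a set \<Rightarrow> ('a \<Rightarrow> 'a \<Rightarrow> bool) \<Rightarrow> 'a \<Rightarrow> 'a set" where
  "closed_nbhd V adj u = insert u (open_nbhd V adj u)"

definition connected_on :: "('a \<Rightarrow> 'a \<Rightarrow> bool) \<Rightarrow> 'a set \<Rightarrow> bool" where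
  "connected_on adj S \<longleftrightarrow>
     (\<forall>x\<in>S. \<forall>y\<in>S. (\<lambda>a b. a \<in> S \<and> b \<in> S \<and> adj a b)\<^sup>*\<^sup>* x y)"

definition two_connected_on :: "'a set \<Rightarrow> ('a \<Rightarrow> 'a \<Rightarrow> bool) \<Rightarrow> 'a set \<Rightarrow> bool" where
  "two_connected_on V adj S \<longleftrightarrow> S \<subseteq> V \<and> card S \<ge> 3 \<and> connected_on adj S
     \<and> (\<forall>x\<in>S. connected_on adj (S - {x}))"

definition is_block :: "'a set \<Rightarrow> ('a \<Rightarrow> 'a \<Rightarrow> bool) \<Rightarrow> 'a set \<Rightarrow> bool" where
  "is_block V adj S \<longleftrightarrow> two_connected_on V adj S
     \<and> (\<forall>T. two_connected_on V adj T \<and> S \<subseteq> T \<longrightarrow> T = S)"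

definition is_clique :: "'a set \<Rightarrow> ('a \<Rightarrow> 'a \<Rightarrow> bool) \<Rightarrow> 'a set \<Rightarrow> bool" where
  "is_clique V adj S \<longleftrightarrow> S \<subseteq> V \<and> (\<forall>x\<in>S. \<forall>y\<in>S. x \<noteq> y \<longrightarrow> adj x y)"

definition block_graph :: "'a set \<Rightarrow> ('a \<Rightarrow> 'a \<Rightarrow> bool) \<Rightarrow> bool" where
  "block_graph V adj \<longleftrightarrow> simple_graph V adj \<and> (\<forall>S. is_block V adj S \<longrightarrow> is_clique V adj S)"

definition is_max_clique :: "'a set \<Rightarrow> ('a \<Rightarrow> 'a \<Rightarrow> bool) \<Rightarrow> 'a set \<Rightarrow> bool" where
  "is_max_clique V adj S \<longleftrightarrow> S \<noteq> {} \<and> is_clique V adj S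
     \<and> (\<forall>T. is_clique V adj T \<and> S \<subseteq> T \<longrightarrow> T = S)"

definition n_Q :: "'a set \<Rightarrow> ('a \<Rightarrow> 'a \<Rightarrow> bool) \<Rightarrow> nat" where
  "n_Q V adj = card {S. is_max_clique V adj S}"

definition identifiable :: "'a set \<Rightarrow> ('a \<Rightarrow> 'a \<Rightarrow> bool) \<Rightarrow> bool" where
  "identifiable V adj \<longleftrightarrow>
     (\<forall>u\<in>V. \<forall>v\<in>V. u \<noteq> v \<longrightarrow> closed_nbhd V adj u \<noteq> closed_nbhd V adj v)"

definition LD_code :: "'a set \<Rightarrow> ('a \<Rightarrow> 'a \<Rightarrow> bool) \<Rightarrow> 'a set \<Rightarrow> bool" where
  "LD_code V adj C \<longleftrightarrow> C \<subseteq> V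
     \<and> (\<forall>u\<in>V. closed_nbhd V adj u \<inter> C \<noteq> {})
     \<and> (\<forall>u\<in>V - C. \<forall>v\<in>V - C. u \<noteq> v \<longrightarrow> open_nbhd V adj u \<inter> C \<noteq> open_nbhd V adj v \<inter> C)"

definition gamma_LD :: "'a set \<Rightarrow> ('a \<Rightarrow> 'a \<Rightarrow> bool) \<Rightarrow> nat" where
  "gamma_LD V adj = Min {card C | C. LD_code V adj C}"

end

theory Submission
  imports Defs
begin

lemma ex_max_card:
  assumes "finite F" "X \<in> F"
  shows "\<exists>B\<in>F. \<forall>T\<in>F. card T \<le> card B"
proof -
  have "Max (card ` F) \<in> card ` F" using assms by (intro Max_in) auto
  then obtain B where B: "B \<in> F" "card B = Max (card ` F)" by auto
  show ?thesis using B assms by (metis Max_ge finite_imageI image_eqI)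
qed

locale bg =
  fixes V :: "'a set" and adj :: "'a \<Rightarrow> 'a \<Rightarrow> bool"
  assumes bgr: "block_graph V adj"
begin

lemma finV: "finite V" using bgr unfolding block_graph_def simple_graph_def by auto
lemma adjV: "adj x y \<Longrightarrow> x \<in> V \<and> y \<in> V" using bgr unfolding block_graph_def simple_graph_def by auto
lemma adj_sym: "adj x y \<Longrightarrow> adj y x" using bgr unfolding block_graph_def simple_graph_def by auto
lemma adj_irr: "\<not> adj x x" using bgr unfolding block_graph_def simple_graph_def by auto
lemma adj_ne: "adj x y \<Longrightarrow> x \<noteq> y" using adj_irr by auto

lemma two_conn_clique:
  assumes "two_connected_on V adj S"
  shows "is_clique V adj S"
proof -
  let ?F = "{T. two_connected_on V adj T \<and> S \<subseteq> T}"
  have fin: "finite ?F"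
    by (rule finite_subset[of _ "Pow V"]) (auto simp: two_connected_on_def finV)
  obtain B where B: "B \<in> ?F" "\<forall>T\<in>?F. card T \<le> card B"
    using ex_max_card[OF fin, of S] assms by auto
  have "is_block V adj B"
    unfolding is_block_def
  proof (intro conjI allI impI)
    show "two_connected_on V adj B" using B by auto
    fix T assume T: "two_connected_on V adj T \<and> B \<subseteq> T"
    then have "T \<in> ?F" using B by auto
    then have "card T \<le> card B" using B by auto
    moreover have "finite T" using T finV by (meson finite_subset two_connected_on_def)
    ultimately show "T = B" using T card_seteq[of T B] by auto
  qed
  then have "is_clique V adj B" using bgr unfolding block_graph_def by auto
  then show ?thesis using B assms unfolding is_clique_def two_connected_on_def by blast
qed

definition RS :: "'a set \<Rightarrow> 'a \<Rightarrow> 'a \<Rightarrow> bool" where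
  "RS S a b \<longleftrightarrow> a \<in> S \<and> b \<in> S \<and> adj a b"

lemma RS_sym: "symp (RS S)"
  unfolding RS_def symp_def using adj_sym by auto

lemma path_conn:
  assumes "\<forall>i<m. adj (p i) (p (Suc i))" "p ` {..m} \<subseteq> S"
  shows "i \<le> m \<Longrightarrow> (RS S)\<^sup>*\<^sup>* (p 0) (p i)"
proof (induction i)
  case 0 then show ?case by auto
next
  case (Suc i)
  then have "RS S (p i) (p (Suc i))" using assms unfolding RS_def by auto
  then show ?case using Suc by (meson Suc_leD rtranclp.rtrancl_into_rtrancl)
qed

lemma path_connected_on:
  assumes "\<forall>i<m. adj (p i) (p (Suc i))"
  shows "connected_on adj (p ` {..m})"
proof -
  have c: "(RS (p ` {..m}))\<^sup>*\<^sup>* (p 0) (p i)" if "i \<le> m" for i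
    using path_conn[OF assms, of "p ` {..m}"] that by auto
  show ?thesis unfolding connected_on_def
  proof (intro ballI)
    fix x y assume "x \<in> p ` {..m}" "y \<in> p ` {..m}"
    then obtain a b where ab: "a \<le> m" "b \<le> m" "x = p a" "y = p b" by auto
    have "(RS (p ` {..m}))\<^sup>*\<^sup>* x (p 0)"
      using c[OF ab(1)] ab(3) by (metis RS_sym sympD symp_rtranclp)
    then have "(RS (p ` {..m}))\<^sup>*\<^sup>* x y" using c[OF ab(2)] ab(4) by auto
    then show "(\<lambda>a b. a \<in> p ` {..m} \<and> b \<in> p ` {..m} \<and> adj a b)\<^sup>*\<^sup>* x y"
      unfolding RS_def by simp
  qed
qed

definition is_cycle :: "(nat \<Rightarrow> 'a) \<Rightarrow> nat \<Rightarrow> bool" where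
  "is_cycle h n \<longleftrightarrow> n \<ge> 3 \<and> inj_on h {..<n} \<and> (\<forall>i<n. adj (h i) (h (Suc i mod n)))"

lemma cycle_two_conn:
  assumes cyc: "is_cycle h n"
  shows "two_connected_on V adj (h ` {..<n})"
proof -
  have n3: "n \<ge> 3" and inj: "inj_on h {..<n}" and ad: "\<forall>i<n. adj (h i) (h (Suc i mod n))"
    using cyc unfolding is_cycle_def by auto
  have sub: "h ` {..<n} \<subseteq> V" using ad adjV by auto
  have card: "card (h ` {..<n}) = n" using inj by (simp add: card_image)
  have eq1: "h ` {..<n} = h ` {..n-1}" using n3 by (metis Suc_diff_1 lessThan_Suc_atMost neq0_conv not_numeral_le_zero)
  have "connected_on adj (h ` {..n-1})"
    apply (rule path_connected_on)
    using ad by (metis Suc_lessD less_diff_conv mod_less add.commute plus_1_eq_Suc less_diff_conv)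
  then have conn: "connected_on adj (h ` {..<n})" using eq1 by simp
  have rem: "connected_on adj (h ` {..<n} - {x})" if x: "x \<in> h ` {..<n}" for x
  proof -
    obtain j where j: "j < n" "x = h j" using x by auto
    define p where "p i = h ((i + j + 1) mod n)" for i
    have padj: "\<forall>i<n-2. adj (p i) (p (Suc i))"
    proof (intro allI impI)
      fix i assume "i < n - 2"
      have "adj (h ((i + j + 1) mod n)) (h (Suc ((i + j + 1) mod n) mod n))"
        using ad n3 by auto
      moreover have "Suc ((i + j + 1) mod n) mod n = (Suc i + j + 1) mod n"
        by (simp add: mod_Suc_eq)
      ultimately show "adj (p i) (p (Suc i))" unfolding p_def by simp
    qed
    have "p ` {..n-2} = h ` {..<n} - {x}"
    proof
      show "p ` {..n-2} \<subseteq> h ` {..<n} - {x}"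
      proof
        fix y assume "y \<in> p ` {..n-2}"
        then obtain i where i: "i \<le> n - 2" "y = h ((i + j + 1) mod n)" unfolding p_def by auto
        have ne: "(i + j + 1) mod n \<noteq> j"
        proof
          assume a: "(i + j + 1) mod n = j"
          have "(i + j + 1) mod n = (if i + j + 1 < n then i + j + 1 else i + j + 1 - n)"
            using i j n3 by (simp add: mod_if)
          then show False using a i j n3 by (auto split: if_splits)
        qed
        have "(i + j + 1) mod n < n" using n3 by auto
        then show "y \<in> h ` {..<n} - {x}" using i j ne inj by (auto simp: inj_on_eq_iff)
      qed
    next
      show "h ` {..<n} - {x} \<subseteq> p ` {..n-2}"
      proof
        fix y assume "y \<in> h ` {..<n} - {x}"
        then obtain b where b: "b < n" "y = h b" "b \<noteq> j" using j by auto
        show "y \<in> p ` {..n-2}"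
        proof (cases "b > j")
          case True
          have "p (b - j - 1) = y" unfolding p_def using b True by simp
          moreover have "b - j - 1 \<le> n - 2" using b True by auto
          ultimately show ?thesis by auto
        next
          case False
          then have "b < j" using b by auto
          have "(b + n - j - 1 + j + 1) mod n = b" using b \<open>b < j\<close> j by simp
          then have "p (b + n - j - 1) = y" unfolding p_def using b by simp
          moreover have "b + n - j - 1 \<le> n - 2" using b \<open>b < j\<close> j by auto
          ultimately show ?thesis by (metis atMost_iff image_eqI)
        qed
      qed
    qed
    then show ?thesis using path_connected_on[OF padj] by simp
  qed
  show ?thesis unfolding two_connected_on_def using sub card n3 conn rem by auto
qed

lemma cycle_clique: "is_cycle h n \<Longrightarrow> is_clique V adj (h ` {..<n})"
  using cycle_two_conn two_conn_clique by blast

end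

context bg begin

lemma cyc4:
  assumes "distinct [a,b,c,e]" "adj a b" "adj b c" "adj c e" "adj e a"
  shows "is_clique V adj {a,b,c,e}"
proof -
  have "is_cycle (nth [a,b,c,e]) 4"
    unfolding is_cycle_def
  proof (intro conjI allI impI)
    show "inj_on (nth [a,b,c,e]) {..<4}" using assms(1) inj_on_nth[of "[a,b,c,e]" "{..<4}"] by auto
    fix i :: nat assume "i < 4"
    then have "i = 0 \<or> i = 1 \<or> i = 2 \<or> i = 3" by auto
    then show "adj ([a,b,c,e] ! i) ([a,b,c,e] ! (Suc i mod 4))" using assms by auto
  qed simp
  moreover have "nth [a,b,c,e] ` {..<4} = {a,b,c,e}"
  proof -
    have "{..<4::nat} = {0,1,2,3}" by auto
    then show ?thesis by simp
  qed
  ultimately show ?thesis using cycle_clique by metis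
qed

lemma four_free:
  assumes "u \<noteq> v" "\<not> adj u v" "w1 \<noteq> w2" "adj u w1" "adj u w2" "adj v w1" "adj v w2"
  shows False
proof -
  have "distinct [u,w1,v,w2]" using assms adj_ne by auto
  then have "is_clique V adj {u,w1,v,w2}" using cyc4[of u w1 v w2] assms adj_sym by blast
  then show False using assms unfolding is_clique_def by auto
qed

lemma ex_max_clique:
  assumes "S \<noteq> {}" "is_clique V adj S"
  shows "\<exists>Q. is_max_clique V adj Q \<and> S \<subseteq> Q"
proof -
  let ?F = "{T. is_clique V adj T \<and> S \<subseteq> T}"
  have fin: "finite ?F"
    by (rule finite_subset[of _ "Pow V"]) (auto simp: is_clique_def finV)
  obtain B where B: "B \<in> ?F" "\<forall>T\<in>?F. card T \<le> card B"
    using ex_max_card[OF fin, of S] assms by auto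
  have "is_max_clique V adj B"
    unfolding is_max_clique_def
  proof (intro conjI allI impI)
    show "B \<noteq> {}" using B assms by auto
    show "is_clique V adj B" using B by auto
    fix T assume T: "is_clique V adj T \<and> B \<subseteq> T"
    then have "T \<in> ?F" using B by auto
    then have "card T \<le> card B" using B by auto
    moreover have "finite T" using T finV by (meson finite_subset is_clique_def)
    ultimately show "T = B" using T card_seteq[of T B] by auto
  qed
  then show ?thesis using B by auto
qed

lemma pair_clique: "adj u w \<Longrightarrow> is_clique V adj {u,w}"
  unfolding is_clique_def using adjV adj_sym by auto

lemma single_clique: "u \<in> V \<Longrightarrow> is_clique V adj {u}"
  unfolding is_clique_def by auto

lemma mq_max: "is_max_clique V adj Q \<Longrightarrow> is_clique V adj T \<Longrightarrow> Q \<subseteq> T \<Longrightarrow> T = Q"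
  unfolding is_max_clique_def by blast

lemma F1:
  assumes Q1: "is_max_clique V adj Q1" and Q2: "is_max_clique V adj Q2"
    and ab: "a \<noteq> b" "a \<in> Q1" "b \<in> Q1" "a \<in> Q2" "b \<in> Q2"
  shows "Q1 = Q2"
proof (rule ccontr)
  assume ne: "Q1 \<noteq> Q2"
  have c1: "\<forall>x\<in>Q1. \<forall>y\<in>Q1. x \<noteq> y \<longrightarrow> adj x y" "Q1 \<subseteq> V"
    using Q1 unfolding is_max_clique_def is_clique_def by auto
  have c2: "\<forall>x\<in>Q2. \<forall>y\<in>Q2. x \<noteq> y \<longrightarrow> adj x y" "Q2 \<subseteq> V"
    using Q2 unfolding is_max_clique_def is_clique_def by auto
  have "\<not> is_clique V adj (Q1 \<union> Q2)"
  proof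
    assume "is_clique V adj (Q1 \<union> Q2)"
    then have "Q1 \<union> Q2 = Q1" "Q1 \<union> Q2 = Q2" using mq_max[OF Q1] mq_max[OF Q2] by (simp, simp)
    then show False using ne by auto
  qed
  then obtain x y where xy: "x \<in> Q1 \<union> Q2" "y \<in> Q1 \<union> Q2" "x \<noteq> y" "\<not> adj x y"
    using c1(2) c2(2) unfolding is_clique_def by blast
  have key: False if "x \<in> Q1" "x \<notin> Q2" "y \<in> Q2" "y \<notin> Q1" "x \<noteq> y" "\<not> adj x y" for x y
  proof -
    have "distinct [x,a,y,b]" using that ab by auto
    moreover have "adj x a" "adj a y" "adj y b" "adj b x" using that ab c1 c2 by auto
    ultimately have "is_clique V adj {x,a,y,b}" using cyc4[of x a y b] by blast
    then show False using that unfolding is_clique_def by auto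
  qed
  show False using xy c1 c2 key[of x y] key[of y x] adj_sym by blast
qed

lemma triG:
  assumes Q: "is_max_clique V adj Q" and R: "is_max_clique V adj R" and QR: "Q \<noteq> R"
    and as: "x \<in> Q" "x \<in> R" "y \<in> Q" "z \<in> R" "y \<noteq> x" "z \<noteq> x"
  shows "\<not> adj y z"
proof
  assume yz: "adj y z"
  have cQ: "\<forall>a\<in>Q. \<forall>b\<in>Q. a \<noteq> b \<longrightarrow> adj a b" using Q unfolding is_max_clique_def is_clique_def by blast
  have cR: "\<forall>a\<in>R. \<forall>b\<in>R. a \<noteq> b \<longrightarrow> adj a b" using R unfolding is_max_clique_def is_clique_def by blast
  have xy: "adj x y" using cQ as(1,3,5) by metis
  have xz: "adj x z" using cR as(2,4,6) by metis
  have "is_clique V adj {x,y,z}" unfolding is_clique_def using yz xy xz adjV adj_sym by auto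
  then obtain K where K: "is_max_clique V adj K" "{x,y,z} \<subseteq> K" using ex_max_clique[OF insert_not_empty] by blast
  have inK: "x \<in> K" "y \<in> K" "z \<in> K" using K(2) by auto
  have n1: "x \<noteq> y" "x \<noteq> z" using as(5,6) by auto
  have "K = Q" by (rule F1[OF K(1) Q n1(1) inK(1) inK(2) as(1) as(3)])
  moreover have "K = R" by (rule F1[OF K(1) R n1(2) inK(1) inK(3) as(2) as(4)])
  ultimately show False using QR by simp
qed

end

context bg begin

definition rt :: "'a \<Rightarrow> 'a" where "rt v = (SOME w. adj\<^sup>*\<^sup>* v w)"
definition dd :: "'a \<Rightarrow> nat" where "dd v = (LEAST n. (adj ^^ n) (rt v) v)"

lemma conn_sym: "adj\<^sup>*\<^sup>* a b \<Longrightarrow> adj\<^sup>*\<^sup>* b a"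
proof -
  have "symp adj" using adj_sym by (auto simp: symp_def)
  then show "adj\<^sup>*\<^sup>* a b \<Longrightarrow> adj\<^sup>*\<^sup>* b a" by (metis sympD symp_rtranclp)
qed

lemma rt_conn: "adj\<^sup>*\<^sup>* v (rt v)"
  unfolding rt_def by (rule someI[of _ v]) simp

lemma rt_eq: "adj\<^sup>*\<^sup>* u v \<Longrightarrow> rt u = rt v"
proof -
  assume uv: "adj\<^sup>*\<^sup>* u v"
  have "(\<lambda>w. adj\<^sup>*\<^sup>* u w) = (\<lambda>w. adj\<^sup>*\<^sup>* v w)"
    using uv conn_sym by (metis (mono_tags, opaque_lifting) rtranclp_trans)
  then show ?thesis unfolding rt_def by simp
qed

lemma rt_adj: "adj u v \<Longrightarrow> rt u = rt v" using rt_eq by auto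

lemma dd_spec: "(adj ^^ dd v) (rt v) v"
proof -
  have "\<exists>n. (adj ^^ n) (rt v) v" using rt_conn conn_sym rtranclp_imp_relpowp by metis
  then show ?thesis unfolding dd_def by (rule LeastI_ex)
qed

lemma dd_le: "(adj ^^ n) (rt v) v \<Longrightarrow> dd v \<le> n"
  unfolding dd_def by (rule Least_le)

lemma dd0: "dd v = 0 \<Longrightarrow> rt v = v"
  using dd_spec[of v] by simp

lemma dd_adj: "adj u v \<Longrightarrow> dd v \<le> dd u + 1"
proof -
  assume a: "adj u v"
  have "(adj ^^ Suc (dd u)) (rt u) v" using dd_spec[of u] a by (rule relpowp_Suc_I)
  then show ?thesis using rt_adj[OF a] dd_le by fastforce
qed

lemma dd_low: "dd v > 0 \<Longrightarrow> \<exists>w. adj w v \<and> dd w = dd v - 1"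
proof -
  assume "dd v > 0"
  then obtain n where n: "dd v = Suc n" by (cases "dd v") auto
  then have "(adj ^^ Suc n) (rt v) v" using dd_spec[of v] by simp
  then obtain w where w: "(adj ^^ n) (rt v) w" "adj w v" by (rule relpowp_Suc_E)
  have "rt w = rt v" using rt_adj[OF w(2)] .
  then have "dd w \<le> n" using dd_le w(1) by simp
  moreover have "dd v \<le> dd w + 1" using dd_adj[OF w(2)] .
  ultimately show ?thesis using w n by auto
qed

lemma desc: "dd x = k \<Longrightarrow> \<exists>f. f 0 = x \<and> (\<forall>i<k. adj (f (Suc i)) (f i))
   \<and> (\<forall>i\<le>k. dd (f i) = k - i \<and> rt (f i) = rt x)"
proof (induction k arbitrary: x)
  case 0
  then show ?case by (intro exI[of _ "\<lambda>_. x"]) auto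
next
  case (Suc k)
  obtain w where w: "adj w x" "dd w = k" using dd_low[of x] Suc by auto
  obtain g where g: "g 0 = w" "\<forall>i<k. adj (g (Suc i)) (g i)" "\<forall>i\<le>k. dd (g i) = k - i \<and> rt (g i) = rt w"
    using Suc.IH[OF w(2)] by auto
  define f where "f i = (if i = 0 then x else g (i - 1))" for i
  have "f 0 = x" unfolding f_def by simp
  moreover have "\<forall>i<Suc k. adj (f (Suc i)) (f i)"
  proof (intro allI impI)
    fix i assume "i < Suc k"
    then show "adj (f (Suc i)) (f i)" unfolding f_def using g w
      by (cases i) auto
  qed
  moreover have "\<forall>i\<le>Suc k. dd (f i) = Suc k - i \<and> rt (f i) = rt x"
  proof (intro allI impI)
    fix i assume "i \<le> Suc k"
    then show "dd (f i) = Suc k - i \<and> rt (f i) = rt x" unfolding f_def using g w Suc.prems rt_adj[OF w(1)]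
      by (cases i) auto
  qed
  ultimately show ?case by blast
qed

lemma lemM:
  assumes a1: "adj v p1" and a2: "adj v p2" and ne: "p1 \<noteq> p2"
    and l1: "dd p1 < dd v" and l2: "dd p2 = dd p1"
  shows "adj p1 p2"
proof -
  define k where "k = dd p1"
  have dv: "dd v = Suc k" using dd_adj[OF adj_sym[OF a1]] l1 unfolding k_def by auto
  have rr: "rt p2 = rt p1" using rt_adj[OF a1] rt_adj[OF a2] by simp
  obtain f where f: "f 0 = p1" "\<forall>i<k. adj (f (Suc i)) (f i)" "\<forall>i\<le>k. dd (f i) = k - i \<and> rt (f i) = rt p1"
    using desc[of p1 k] k_def by auto
  obtain g where g: "g 0 = p2" "\<forall>i<k. adj (g (Suc i)) (g i)" "\<forall>i\<le>k. dd (g i) = k - i \<and> rt (g i) = rt p1"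
    using desc[of p2 k] k_def l2 rr by auto
  have fk: "f k = g k"
  proof -
    have "rt (f k) = f k" using f(3) dd0 by auto
    moreover have "rt (g k) = g k" using g(3) dd0 by auto
    ultimately show ?thesis using f(3) g(3) by auto
  qed
  define j where "j = (LEAST i. f i = g i)"
  have fj: "f j = g j" unfolding j_def using fk by (rule LeastI)
  have jk: "j \<le> k" unfolding j_def using fk by (rule Least_le)
  have jmin: "f i \<noteq> g i" if "i < j" for i using that unfolding j_def using not_less_Least by blast
  have j1: "j \<ge> 1" using fj f(1) g(1) ne by (cases j) auto
  define n where "n = 2 * j + 2"
  define h where "h i = (if i = 0 then v else if i \<le> j + 1 then f (i - 1) else g (2 * j + 1 - i))" for i
  have lev: "dd (h i) = (if i = 0 then Suc k else if i \<le> j + 1 then k - (i - 1) else k - (2 * j + 1 - i))"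
    if "i < n" for i
    using that f(3) g(3) dv jk unfolding h_def n_def by auto
  have cyc: "is_cycle h n"
    unfolding is_cycle_def
  proof (intro conjI allI impI)
    show "3 \<le> n" using j1 unfolding n_def by auto
    show "inj_on h {..<n}"
    proof (rule inj_onI)
      fix a b assume ab: "a \<in> {..<n}" "b \<in> {..<n}" "h a = h b"
      have an: "a < n" and bn: "b < n" using ab by auto
      have key: "a = b" if ab': "a < n" "b < n" "h a = h b" "a \<le> b" for a b
      proof -
        have la: "dd (h a) = dd (h b)" using ab' by simp
        consider "a = 0" | "0 < a" "a \<le> j + 1" | "j + 1 < a" by linarith
        then show ?thesis
        proof cases
          case 1
          show ?thesis
          proof (rule ccontr)
            assume "a \<noteq> b"
            then have "b \<noteq> 0" using 1 by simp
            then have "dd (h b) \<le> k" using lev[OF ab'(2)] by auto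
            moreover have "dd (h a) = Suc k" using lev[OF ab'(1)] 1 by simp
            ultimately show False using la by simp
          qed
        next
          case 2
          have ea: "h a = f (a - 1)" using 2 unfolding h_def by simp
          have da: "dd (h a) = k - (a - 1)" using lev[OF ab'(1)] 2 by simp
          show ?thesis
          proof (cases "b \<le> j + 1")
            case True
            have "dd (h b) = k - (b - 1)" using lev[OF ab'(2)] True 2 ab'(4) by simp
            then show ?thesis using la da 2 True jk ab'(4) by linarith
          next
            case False
            have eb: "h b = g (2 * j + 1 - b)" using False unfolding h_def by simp
            have db: "dd (h b) = k - (2 * j + 1 - b)" using lev[OF ab'(2)] False by simp
            have e: "a - 1 = 2 * j + 1 - b" using la da db 2 False jk ab'(2) unfolding n_def by linarith
            have "f (a - 1) = g (a - 1)" using ea eb e ab'(3) by simp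
            moreover have "a - 1 < j" using e False ab'(2) unfolding n_def by linarith
            ultimately show ?thesis using jmin by blast
          qed
        next
          case 3
          then have "j + 1 < b" using ab'(4) by simp
          then have "dd (h b) = k - (2 * j + 1 - b)" using lev[OF ab'(2)] by simp
          moreover have "dd (h a) = k - (2 * j + 1 - a)" using lev[OF ab'(1)] 3 by simp
          ultimately show ?thesis using la 3 jk ab' unfolding n_def by linarith
        qed
      qed
      show "a = b"
      proof (cases "a \<le> b")
        case True then show ?thesis using key an bn ab(3) by blast
      next
        case False then show ?thesis using key[of b a] an bn ab(3) by simp
      qed
    qed
    fix i assume i: "i < n"
    consider "i = 0" | "0 < i" "i \<le> j" | "i = j + 1" | "j + 1 < i" "i < 2 * j + 1" | "i = 2 * j + 1"
      using i unfolding n_def by linarith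
    then show "adj (h i) (h (Suc i mod n))"
    proof cases
      case 1
      have m: "Suc i mod n = 1" using 1 j1 unfolding n_def by simp
      have "h i = v" using 1 unfolding h_def by simp
      moreover have "h 1 = p1" using f(1) unfolding h_def by simp
      ultimately show ?thesis using a1 m by simp
    next
      case 2
      have m: "Suc i mod n = Suc i" using 2 unfolding n_def by simp
      have e1: "h i = f (i - 1)" using 2 unfolding h_def by simp
      have e2: "h (Suc i) = f i" using 2 unfolding h_def by simp
      have "i - 1 < k" using 2 jk by linarith
      then have "adj (f (Suc (i - 1))) (f (i - 1))" using f(2) by blast
      moreover have "Suc (i - 1) = i" using 2 by simp
      ultimately have "adj (f (i - 1)) (f i)" using adj_sym by metis
      then show ?thesis using m e1 e2 by simp
    next
      case 3
      have m: "Suc i mod n = j + 2"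
      proof -
        have "Suc i < n" using 3 j1 unfolding n_def by linarith
        then show ?thesis using 3 by simp
      qed
      have e1: "h i = g j" using 3 fj unfolding h_def by simp
      have e2: "h (j + 2) = g (j - 1)" unfolding h_def using j1 by simp
      have "j - 1 < k" using j1 jk by linarith
      then have "adj (g (Suc (j - 1))) (g (j - 1))" using g(2) by blast
      moreover have "Suc (j - 1) = j" using j1 by simp
      ultimately show ?thesis using m e1 e2 by metis
    next
      case 4
      have m: "Suc i mod n = Suc i" using 4 unfolding n_def by simp
      have e1: "h i = g (Suc (2 * j - i))" using 4 unfolding h_def by (simp add: Suc_diff_le)
      have e2: "h (Suc i) = g (2 * j - i)" using 4 unfolding h_def by simp
      have "2 * j - i < k" using 4 jk by linarith
      then have "adj (g (Suc (2 * j - i))) (g (2 * j - i))" using g(2) by blast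
      then show ?thesis using m e1 e2 by simp
    next
      case 5
      have m: "Suc i mod n = 0" using 5 unfolding n_def by simp
      have e1: "h i = p2" using 5 g(1) j1 unfolding h_def by simp
      have "h 0 = v" unfolding h_def by simp
      then show ?thesis using m e1 a2 adj_sym by metis
    qed
  qed
  have "p1 \<in> h ` {..<n}" using f(1) unfolding h_def n_def by (auto intro!: image_eqI[of _ _ 1])
  moreover have "p2 \<in> h ` {..<n}" using g(1) j1 unfolding h_def n_def by (auto intro!: image_eqI[of _ _ "2*j+1"])
  ultimately show ?thesis using cycle_clique[OF cyc] ne unfolding is_clique_def by auto
qed

end

context bg begin

definition MQ where "MQ = {Q. is_max_clique V adj Q}"
definition cc where "cc Q = (SOME x. x \<in> Q \<and> (\<forall>y\<in>Q. dd y \<le> dd x))"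
definition CC where "CC = cc ` MQ"
definition TT where "TT u = open_nbhd V adj u \<inter> CC"

lemma finMQ: "finite MQ"
  by (rule finite_subset[of _ "Pow V"]) (auto simp: MQ_def is_max_clique_def is_clique_def finV)

lemma mq_sub: "is_max_clique V adj Q \<Longrightarrow> Q \<subseteq> V"
  unfolding is_max_clique_def is_clique_def by auto

lemma mq_adj: "is_max_clique V adj Q \<Longrightarrow> x \<in> Q \<Longrightarrow> y \<in> Q \<Longrightarrow> x \<noteq> y \<Longrightarrow> adj x y"
  unfolding is_max_clique_def is_clique_def by auto

lemma cc_spec:
  assumes "is_max_clique V adj Q"
  shows "cc Q \<in> Q \<and> (\<forall>y\<in>Q. dd y \<le> dd (cc Q))"
proof -
  have fin: "finite Q" using mq_sub[OF assms] finV finite_subset by auto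
  have ne: "Q \<noteq> {}" using assms unfolding is_max_clique_def by auto
  have "Max (dd ` Q) \<in> dd ` Q" using fin ne by (intro Max_in) auto
  then obtain x where x: "x \<in> Q" "dd x = Max (dd ` Q)" by auto
  have "\<forall>y\<in>Q. dd y \<le> dd x" using x fin by auto
  then have "\<exists>x. x \<in> Q \<and> (\<forall>y\<in>Q. dd y \<le> dd x)" using x by auto
  then show ?thesis unfolding cc_def by (rule someI_ex)
qed

lemma cc_in_CC: "is_max_clique V adj Q \<Longrightarrow> cc Q \<in> CC"
  unfolding CC_def MQ_def by auto

lemma CC_sub: "CC \<subseteq> V"
  unfolding CC_def MQ_def using cc_spec mq_sub by blast

lemma cc_T:
  assumes "is_max_clique V adj Q" "u \<in> Q" "u \<notin> CC"
  shows "cc Q \<in> TT u"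
proof -
  have "cc Q \<in> Q" "cc Q \<in> CC" using cc_spec[OF assms(1)] cc_in_CC[OF assms(1)] by auto
  moreover then have "cc Q \<noteq> u" using assms by auto
  ultimately have "adj u (cc Q)" using mq_adj[OF assms(1)] assms by auto
  then show ?thesis unfolding TT_def open_nbhd_def using \<open>cc Q \<in> CC\<close> adjV by auto
qed

lemma ex_mq: "u \<in> V \<Longrightarrow> \<exists>Q. is_max_clique V adj Q \<and> u \<in> Q"
  using ex_max_clique[of "{u}"] single_clique by auto

lemma ex_mq2: "adj u w \<Longrightarrow> \<exists>Q. is_max_clique V adj Q \<and> u \<in> Q \<and> w \<in> Q"
  using ex_max_clique[of "{u,w}"] pair_clique by auto

lemma lowcl: "dd x > 0 \<Longrightarrow> \<exists>P. is_max_clique V adj P \<and> x \<in> P \<and> (\<exists>y\<in>P. dd y < dd x)"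
proof -
  assume "dd x > 0"
  then obtain w where w: "adj w x" "dd w = dd x - 1" using dd_low by auto
  obtain P where "is_max_clique V adj P" "w \<in> P" "x \<in> P" using ex_mq2[OF w(1)] by auto
  moreover have "dd w < dd x" using w \<open>dd x > 0\<close> by simp
  ultimately show ?thesis by blast
qed

lemma S2:
  assumes Q1: "is_max_clique V adj Q1" and Q2: "is_max_clique V adj Q2"
    and x: "x \<in> Q1" "x \<in> Q2" and y1: "y1 \<in> Q1" "dd y1 < dd x" and y2: "y2 \<in> Q2" "dd y2 < dd x"
  shows "Q1 = Q2"
proof (rule ccontr)
  assume ne: "Q1 \<noteq> Q2"
  have n1: "y1 \<noteq> x" "y2 \<noteq> x" using y1 y2 by auto
  have a1: "adj x y1" using mq_adj[OF Q1 x(1) y1(1)] n1 by auto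
  have a2: "adj x y2" using mq_adj[OF Q2 x(2) y2(1)] n1 by auto
  have "dd x \<le> dd y1 + 1" "dd x \<le> dd y2 + 1" using dd_adj[OF adj_sym[OF a1]] dd_adj[OF adj_sym[OF a2]] by auto
  then have eq: "dd y2 = dd y1" using y1 y2 by linarith
  show False
  proof (cases "y1 = y2")
    case True
    then show False using F1[OF Q1 Q2, of x y1] x y1 y2 n1 ne by auto
  next
    case False
    then have "adj y1 y2" using lemM[OF a1 a2 False y1(2) eq] by simp
    then show False using triG[OF Q1 Q2 ne x y1(1) y2(1) n1] by simp
  qed
qed

lemma sep_adj:
  assumes u: "u \<in> V" "u \<notin> CC" and v: "v \<in> V" "v \<notin> CC" and uv: "adj u v"
    and w: "adj u w" "w \<noteq> v" "\<not> adj v w"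
  shows "TT u \<noteq> TT v"
proof
  assume eq: "TT u = TT v"
  obtain Q where Q: "is_max_clique V adj Q" "u \<in> Q" "v \<in> Q" using ex_mq2[OF uv] by auto
  obtain R where R: "is_max_clique V adj R" "u \<in> R" "w \<in> R" using ex_mq2[OF w(1)] by auto
  have c: "cc R \<in> TT u" using cc_T[OF R(1) R(2) u(2)] .
  then have "cc R \<in> TT v" using eq by simp
  then have av: "adj v (cc R)" unfolding TT_def open_nbhd_def by auto
  have QR: "Q \<noteq> R"
  proof
    assume "Q = R"
    then have "w \<in> Q" using R by simp
    then show False using mq_adj[OF Q(1) Q(3)] w by auto
  qed
  have "cc R \<in> R" using cc_spec[OF R(1)] by simp
  moreover have "cc R \<noteq> u" using cc_in_CC[OF R(1)] u by auto
  moreover have "v \<noteq> u" using uv adj_ne by auto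
  ultimately have "\<not> adj v (cc R)" using triG[OF Q(1) R(1) QR Q(2) R(2) Q(3)] by auto
  then show False using av by simp
qed

lemma sep_nonadj:
  assumes u: "u \<in> V" "u \<notin> CC" and v: "v \<in> V" "v \<notin> CC" and uv: "u \<noteq> v" "\<not> adj u v"
    and le: "dd u \<le> dd v"
  shows "TT u \<noteq> TT v"
proof
  assume eq: "TT u = TT v"
  obtain Qu where Qu: "is_max_clique V adj Qu" "u \<in> Qu" using ex_mq[OF u(1)] by auto
  define w0 where "w0 = cc Qu"
  have w0: "w0 \<in> TT u" using cc_T[OF Qu u(2)] unfolding w0_def .
  have uniq: "w = w0" if "w \<in> TT u" for w
  proof (rule ccontr)
    assume ne: "w \<noteq> w0"
    have "w \<in> TT v" "w0 \<in> TT v" using that w0 eq by auto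
    then show False using four_free[OF uv ne] that w0 unfolding TT_def open_nbhd_def by auto
  qed
  have aw0: "adj u w0" "adj v w0" using w0 eq unfolding TT_def open_nbhd_def by auto
  show False
  proof (cases "dd v = 0")
    case True
    then have "dd u = 0" using le by simp
    then have "rt u = u" "rt v = v" using dd0 True by auto
    moreover have "rt u = rt v" using rt_adj[OF aw0(1)] rt_adj[OF aw0(2)] by simp
    ultimately show False using uv by simp
  next
    case False
    obtain P' y' where P': "is_max_clique V adj P'" "v \<in> P'" "y' \<in> P'" "dd y' < dd v"
      using lowcl[of v] False by auto
    have "cc P' \<in> TT u" using cc_T[OF P'(1) P'(2) v(2)] eq by simp
    then have cP': "cc P' = w0" using uniq by simp
    have dw: "dd v \<le> dd w0" using cc_spec[OF P'(1)] P'(2) cP' by auto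
    have w0P': "w0 \<in> P'" using cc_spec[OF P'(1)] cP' by auto
    show False
    proof (cases "dd u = 0")
      case True
      obtain K where K: "is_max_clique V adj K" "u \<in> K" "w0 \<in> K" using ex_mq2[OF aw0(1)] by auto
      have "K = P'" using S2[OF K(1) P'(1) K(3) w0P' K(2) _ P'(3)] True False dw P'(4) by linarith
      then show False using mq_adj[OF P'(1) _ P'(2) uv(1)] K uv by auto
    next
      case False
      obtain P y where P: "is_max_clique V adj P" "u \<in> P" "y \<in> P" "dd y < dd u"
        using lowcl[of u] False by auto
      have "cc P = w0" using cc_T[OF P(1) P(2) u(2)] uniq by simp
      then have w0P: "w0 \<in> P" and "dd u \<le> dd w0" using cc_spec[OF P(1)] P(2) by auto
      then have "P = P'" using S2[OF P(1) P'(1) w0P w0P' P(3) _ P'(3)] P(4) P'(4) dw by linarith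
      then show False using mq_adj[OF P'(1) _ P'(2) uv(1)] P uv by auto
    qed
  qed
qed

lemma CC_LD:
  assumes idf: "identifiable V adj"
  shows "LD_code V adj CC"
  unfolding LD_code_def
proof (intro conjI ballI impI)
  show "CC \<subseteq> V" using CC_sub .
  fix u assume u: "u \<in> V"
  show "closed_nbhd V adj u \<inter> CC \<noteq> {}"
  proof (cases "u \<in> CC")
    case True then show ?thesis unfolding closed_nbhd_def by auto
  next
    case False
    obtain Q where "is_max_clique V adj Q" "u \<in> Q" using ex_mq[OF u] by auto
    then have "cc Q \<in> TT u" using cc_T False by auto
    then show ?thesis unfolding closed_nbhd_def TT_def by auto
  qed
next
  fix u v assume u: "u \<in> V - CC" and v: "v \<in> V - CC" and uv: "u \<noteq> v"
  show "open_nbhd V adj u \<inter> CC \<noteq> open_nbhd V adj v \<inter> CC"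
  proof (cases "adj u v")
    case True
    have "closed_nbhd V adj u \<noteq> closed_nbhd V adj v" using idf u v uv unfolding identifiable_def by auto
    then obtain w where w: "(w \<in> closed_nbhd V adj u \<and> w \<notin> closed_nbhd V adj v) \<or>
                            (w \<in> closed_nbhd V adj v \<and> w \<notin> closed_nbhd V adj u)" by blast
    have "v \<in> closed_nbhd V adj u" "u \<in> closed_nbhd V adj v"
      using True adj_sym adjV unfolding closed_nbhd_def open_nbhd_def by auto
    then consider "adj u w" "w \<noteq> v" "\<not> adj v w" | "adj v w" "w \<noteq> u" "\<not> adj u w"
      using w unfolding closed_nbhd_def open_nbhd_def by auto
    then show ?thesis
    proof cases
      case 1 then show ?thesis using sep_adj[of u v w] u v True unfolding TT_def by auto
    next
      case 2
      have "adj v u" using True adj_sym by blast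
      then have "TT v \<noteq> TT u" using sep_adj[of v u w] u v 2 by blast
      then show ?thesis unfolding TT_def by metis
    qed
  next
    case False
    show ?thesis
    proof (cases "dd u \<le> dd v")
      case True then show ?thesis using sep_nonadj[of u v] u v uv False unfolding TT_def by auto
    next
      case F2: False
      have "\<not> adj v u" using False adj_sym by auto
      then show ?thesis using sep_nonadj[of v u] u v uv F2 unfolding TT_def by auto
    qed
  qed
qed

lemma card_CC: "card CC \<le> n_Q V adj"
  unfolding CC_def n_Q_def MQ_def[symmetric] using finMQ card_image_le by auto

end

lemma gamma_le:
  assumes "finite V" "LD_code V adj C"
  shows "gamma_LD V adj \<le> card C"
proof -
  have "{card C | C. LD_code V adj C} \<subseteq> card ` Pow V" unfolding LD_code_def by auto
  then have "finite {card C | C. LD_code V adj C}" using assms(1) finite_subset by blast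
  then show ?thesis unfolding gamma_LD_def using assms(2) by (intro Min_le) auto
qed

theorem theorem2p3:
  fixes V :: "'a set" and adj :: "'a \<Rightarrow> 'a \<Rightarrow> bool"
  assumes "block_graph V adj"
  shows "(identifiable V adj \<longrightarrow> gamma_LD V adj \<le> n_Q V adj)
       \<and> (\<not> identifiable V adj \<longrightarrow> gamma_LD V adj \<le> card V - 1)"
proof -
  interpret bg V adj using assms by unfold_locales
  show ?thesis
  proof (intro conjI impI)
    assume "identifiable V adj"
    then have "gamma_LD V adj \<le> card CC" using gamma_le[OF finV CC_LD] by simp
    then show "gamma_LD V adj \<le> n_Q V adj" using card_CC by simp
  next
    assume "\<not> identifiable V adj"
    then obtain u v where uv: "u \<in> V" "v \<in> V" "u \<noteq> v" "closed_nbhd V adj u = closed_nbhd V adj v"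
      unfolding identifiable_def by auto
    then have "v \<in> closed_nbhd V adj u" unfolding closed_nbhd_def by auto
    then have auv: "adj u v" using uv(3) unfolding closed_nbhd_def open_nbhd_def by auto
    have "LD_code V adj (V - {u})"
      unfolding LD_code_def
    proof (intro conjI ballI impI)
      fix x assume "x \<in> V"
      show "closed_nbhd V adj x \<inter> (V - {u}) \<noteq> {}"
      proof (cases "x = u")
        case True
        then have "v \<in> closed_nbhd V adj x \<inter> (V - {u})" using auv uv unfolding closed_nbhd_def open_nbhd_def by auto
        then show ?thesis by blast
      next
        case False then show ?thesis using \<open>x \<in> V\<close> unfolding closed_nbhd_def by auto
      qed
    next
      fix x y assume "x \<in> V - (V - {u})" "y \<in> V - (V - {u})" "x \<noteq> y"
      then show "open_nbhd V adj x \<inter> (V - {u}) \<noteq> open_nbhd V adj y \<inter> (V - {u})" by auto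
    qed auto
    then have "gamma_LD V adj \<le> card (V - {u})" using gamma_le[OF finV] by simp
    then show "gamma_LD V adj \<le> card V - 1" using uv(1) finV by simp
  qed
qed

end
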